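(* Assume the standing setup. For any distinct $i,j\in[k]$ there exist distinct indices $i_2,\dots,i_d\in[k]$ such that: (1) if $\alpha_i,\alpha_j$ are not proportional, then $\alpha_i,\alpha_j,\alpha_{i_2},\dots,\alpha_{i_d}$ are linearly independent; (2) if $\alpha_i,\alpha_j$ are proportional, then $\alpha_i,\alpha_{i_2},\dots,\alpha_{i_d}$ are linearly independent.
   Context: Standing setup: $\mathbb{F}$ is a field of characteristic $0$; $W$ is a group with finite generating set $S=\{s_1,\dots,s_k\}$. A linear map on a finite-dimensional space is a (generalized) reflection if it is diagonalizable and $s-\operatorname{Id}$ has rank $1$; a reflection vector is a nonzero vector in $\operatorname{Im}(s-\operatorname{Id})$. $(V_1,\rho_1)$ is an irreducible reflection representation of $(W,S)$ (each $s_i$ acts by a reflection) of dimension $n$, and $\alpha_i\in V_1$ is a chosen reflection vector of $s_i$ for each $i\in[k]$. $d$ is an integer with $1\le d\le n-1$. *)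

theory Defs
  imports "HOL-Analysis.Analysis" "HOL-Algebra.Generated_Groups"
begin

text \<open>Vectors of the n-dimensional representation space V1 are elements of 'f^'n,
  linear maps are matrices 'f^'n^'n over a field 'f of characteristic 0.\<close>

definition diagonalizable :: "'f::field^'n^'n \<Rightarrow> bool" where
  "diagonalizable A \<longleftrightarrow> (\<exists>P D::'f^'n^'n. invertible P \<and>
      (\<forall>i j. i \<noteq> j \<longrightarrow> D $ i $ j = 0) \<and> A = P ** D ** matrix_inv P)"

definition is_reflection :: "'f::field^'n^'n \<Rightarrow> bool" where
  "is_reflection A \<longleftrightarrow> diagonalizable A \<and> rank (A - mat 1) = 1"

definition reflection_vector :: "'f::field^'n^'n \<Rightarrow> 'f^'n \<Rightarrow> bool" where
  "reflection_vector A v \<longleftrightarrow> v \<noteq> 0 \<and> v \<in> range (\<lambda>x. (A - mat 1) *v x)"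

definition is_representation :: "('g, 'b) monoid_scheme \<Rightarrow> ('g \<Rightarrow> 'f::field^'n^'n) \<Rightarrow> bool" where
  "is_representation G rho \<longleftrightarrow> rho \<one>\<^bsub>G\<^esub> = mat 1 \<and>
     (\<forall>g\<in>carrier G. \<forall>h\<in>carrier G. rho (g \<otimes>\<^bsub>G\<^esub> h) = rho g ** rho h)"

definition irreducible_rep :: "('g, 'b) monoid_scheme \<Rightarrow> ('g \<Rightarrow> 'f::field^'n^'n) \<Rightarrow> bool" where
  "irreducible_rep G rho \<longleftrightarrow> (UNIV :: ('f^'n) set) \<noteq> {0} \<and>
     (\<forall>U. vec.subspace U \<and> (\<forall>g\<in>carrier G. \<forall>u\<in>U. rho g *v u \<in> U)
          \<longrightarrow> U = {0} \<or> U = UNIV)"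

definition proportional :: "'f::field^'n \<Rightarrow> 'f^'n \<Rightarrow> bool" where
  "proportional u v \<longleftrightarrow> (\<exists>c. u = c *s v \<or> v = c *s u)"

definition lin_indep_family :: "('f::field^'n) list \<Rightarrow> bool" where
  "lin_indep_family vs \<longleftrightarrow> distinct vs \<and> vec.independent (set vs)"

end

theory Submission imports Defs begin

lemma rank1_range:
  fixes M :: "'f::field^'n^'n"
  assumes "rank M = 1"
  shows "\<exists>c. \<forall>u. \<exists>t. M *v u = t *s c"
proof -
  obtain B where B: "B \<subseteq> rows M" "vec.independent B" "rows M \<subseteq> vec.span B" "card B = vec.dim (rows M)"
    using vec.basis_exists by blast
  have "card B = 1" using B(4) assms by (simp add: row_rank_def_gen)
  then obtain r where r: "B = {r}" using card_1_singletonE by blast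
  have "\<forall>i. \<exists>c. M $ i = c *s r"
  proof
    fix i
    have "row i M \<in> rows M" unfolding rows_def by blast
    then have "M $ i \<in> vec.span {r}" using B(3) r by (auto simp: row_def)
    then show "\<exists>c. M $ i = c *s r" by (auto simp: vec.span_singleton)
  qed
  then obtain c where c: "\<And>i. M $ i = c i *s r" by metis
  show ?thesis
  proof (intro exI allI)
    fix u
    show "M *v u = (\<Sum>j\<in>UNIV. r $ j * u $ j) *s (\<chi> i. c i)"
      by (simp add: matrix_vector_mult_def c vec_eq_iff sum_distrib_left mult.assoc mult.commute mult.left_commute)
  qed
qed

lemma rank1_span:
  fixes M :: "'f::field^'n^'n"
  assumes "rank M = 1" "M *v x = a" "a \<noteq> 0"
  shows "M *v u \<in> vec.span {a}"
proof -
  obtain c where c: "\<And>u. \<exists>t. M *v u = t *s c" using rank1_range[OF assms(1)] by blast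
  obtain t0 where t0: "a = t0 *s c" using c[of x] assms(2) by auto
  have "t0 \<noteq> 0" using t0 assms(3) by auto
  obtain t where t: "M *v u = t *s c" using c by blast
  have "M *v u = (t / t0) *s a" using t t0 \<open>t0 \<noteq> 0\<close> by (simp add: vector_smult_assoc)
  then show ?thesis by (auto simp: vec.span_singleton)
qed

lemma inv_step:
  fixes A B :: "'f::field^'n^'n"
  assumes BA: "B ** A = mat 1" and sub: "vec.subspace U"
    and a: "a \<in> U" and img: "\<And>u. (A - mat 1) *v u \<in> vec.span {a}"
    and a0: "a \<noteq> 0" and u: "u \<in> U"
  shows "B *v u \<in> U"
proof -
  have BAv: "\<And>v. B *v (A *v v) = v" using BA by (simp add: matrix_vector_mul_assoc)
  obtain m where m: "(A - mat 1) *v a = m *s a" using img[of a] by (auto simp: vec.span_singleton)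
  have Aa: "A *v a = (1 + m) *s a" using m by (simp add: matrix_vector_mult_diff_rdistrib algebra_simps vector_sadd_rdistrib)
  have "a = B *v ((1 + m) *s a)" using BAv[of a] Aa by simp
  also have "\<dots> = (1 + m) *s (B *v a)" by (simp add: vector_scalar_commute matrix_vector_right_distrib)
  finally have eq: "a = (1 + m) *s (B *v a)" .
  have "1 + m \<noteq> 0"
  proof
    assume "1 + m = 0"
    then have "a = 0 *s (B *v a)" using eq by simp
    then show False using a0 by simp
  qed
  have "inverse (1 + m) *s a = (inverse (1 + m) * (1 + m)) *s (B *v a)"
    using arg_cong[OF eq, of "\<lambda>v. inverse (1+m) *s v"] by (simp only: vector_smult_assoc)
  then have Ba: "B *v a = inverse (1 + m) *s a" using \<open>1 + m \<noteq> 0\<close> by simp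
  obtain t where t: "(A - mat 1) *v u = t *s a" using img[of u] by (auto simp: vec.span_singleton)
  have "u = B *v (A *v u)" using BAv by simp
  also have "A *v u = u + t *s a" using t by (simp add: matrix_vector_mult_diff_rdistrib algebra_simps)
  finally have "u = B *v u + t *s (B *v a)" by (simp add: matrix_vector_right_distrib vector_scalar_commute matrix_vector_right_distrib)
  then have "B *v u = u - (t * inverse (1 + m)) *s a" using Ba by (simp add: vector_smult_assoc algebra_simps)
  then show ?thesis using sub a u by (simp add: vec.subspace_diff vec.subspace_scale)
qed

lemma extend_family:
  fixes \<alpha> :: "nat \<Rightarrow> 'f::field^'n"
  assumes sp: "vec.span (\<alpha> ` K) = UNIV" and fK: "finite K" and li: "lin_indep_family bs"
    and sub: "set bs \<subseteq> \<alpha> ` K" and len: "length bs + m \<le> CARD('n)"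
  shows "\<exists>ix. length ix = m \<and> distinct ix \<and> set ix \<subseteq> K \<and> lin_indep_family (bs @ map \<alpha> ix)"
proof -
  have ind: "vec.independent (set bs)" and db: "distinct bs" using li by (auto simp: lin_indep_family_def)
  obtain C where C: "set bs \<subseteq> C" "C \<subseteq> \<alpha> ` K" "vec.independent C" "\<alpha> ` K \<subseteq> vec.span C"
    using vec.maximal_independent_subset_extend[OF sub ind] by blast
  have fC: "finite C" using C(2) fK finite_subset by blast
  have "vec.span C = UNIV" using C(4) sp
    by (metis top.extremum_uniqueI vec.span_mono vec.span_span)
  then have cC: "card C = CARD('n)"
    using vec.dim_span_eq_card_independent[OF C(3)] vec_dim_card by metis
  have "card (C - set bs) = card C - card (set bs)" using C(1) fC by (simp add: card_Diff_subset finite_subset)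
  also have "card (set bs) = length bs" using db by (simp add: distinct_card)
  finally have "m \<le> card (C - set bs)" using cC len by simp
  then obtain T where T: "T \<subseteq> C - set bs" "card T = m" by (meson obtain_subset_with_card_n)
  have fT: "finite T" using T(1) fC finite_subset by blast
  obtain xs where xs: "set xs = T" "distinct xs" using finite_distinct_list[OF fT] by blast
  define f where "f = (\<lambda>v. SOME l. l \<in> K \<and> \<alpha> l = v)"
  have f: "\<And>v. v \<in> T \<Longrightarrow> f v \<in> K \<and> \<alpha> (f v) = v"
  proof -
    fix v assume "v \<in> T"
    then have "\<exists>l. l \<in> K \<and> \<alpha> l = v" using T(1) C(2) by auto
    then show "f v \<in> K \<and> \<alpha> (f v) = v" unfolding f_def by (rule someI_ex)
  qed
  define ix where "ix = map f xs"
  have mis: "map \<alpha> ix = xs" unfolding ix_def map_map using f xs(1) by (intro map_idI) auto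
  have "length ix = m" using ix_def xs T(2) distinct_card by fastforce
  moreover have "distinct ix" using xs(2) mis by (metis distinct_map)
  moreover have "set ix \<subseteq> K" using f xs(1) ix_def by auto
  moreover have "lin_indep_family (bs @ map \<alpha> ix)"
  proof -
    have "set bs \<union> set xs \<subseteq> C" using xs T(1) C(1) by auto
    then have "vec.independent (set bs \<union> set xs)" using vec.independent_mono[OF C(3)] by blast
    then show ?thesis unfolding lin_indep_family_def mis using db xs T(1) by auto
  qed
  ultimately show ?thesis by blast
qed

theorem lemma5p8:
  fixes G :: "('g, 'b) monoid_scheme"
    and s :: "nat \<Rightarrow> 'g"
    and k :: nat
    and rho :: "'g \<Rightarrow> ('f::field_char_0)^'n^'n"
    and \<alpha> :: "nat \<Rightarrow> 'f^'n"
    and d i j :: nat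
  assumes "group G"
    and "s ` {1..k} \<subseteq> carrier G"
    and "generate G (s ` {1..k}) = carrier G"
    and "is_representation G rho"
    and "irreducible_rep G rho"
    and "\<forall>l\<in>{1..k}. is_reflection (rho (s l))"
    and "\<forall>l\<in>{1..k}. reflection_vector (rho (s l)) (\<alpha> l)"
    and "1 \<le> d" and "d \<le> CARD('n) - 1"
    and "i \<in> {1..k}" and "j \<in> {1..k}" and "i \<noteq> j"
  shows "\<exists>is :: nat list. length is = d - 1 \<and> distinct is \<and> set is \<subseteq> {1..k} \<and>
     (\<not> proportional (\<alpha> i) (\<alpha> j) \<longrightarrow> lin_indep_family (map \<alpha> (i # j # is))) \<and>
     (proportional (\<alpha> i) (\<alpha> j) \<longrightarrow> lin_indep_family (map \<alpha> (i # is)))"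
proof -
  note grp = assms(1) and Sc = assms(2) and gen = assms(3) and rep = assms(4) and irr = assms(5)
    and refl = assms(6) and rv = assms(7)
  define U where "U = vec.span (\<alpha> ` {1..k})"
  have subU: "vec.subspace U" unfolding U_def by simp
  have aU: "\<And>l. l \<in> {1..k} \<Longrightarrow> \<alpha> l \<in> U" unfolding U_def by (simp add: vec.span_base)
  have a0: "\<And>l. l \<in> {1..k} \<Longrightarrow> \<alpha> l \<noteq> 0" using rv by (auto simp: reflection_vector_def)
  have img: "\<And>l u. l \<in> {1..k} \<Longrightarrow> (rho (s l) - mat 1) *v u \<in> vec.span {\<alpha> l}"
  proof -
    fix l u assume l: "l \<in> {1..k}"
    have r1: "rank (rho (s l) - mat 1) = 1" using refl l by (auto simp: is_reflection_def)
    have "\<alpha> l \<in> range ((*v) (rho (s l) - mat 1))" using rv l by (auto simp: reflection_vector_def)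
    then obtain x where "(rho (s l) - mat 1) *v x = \<alpha> l" by auto
    then show "(rho (s l) - mat 1) *v u \<in> vec.span {\<alpha> l}" using rank1_span[OF r1] a0[OF l] by blast
  qed
  have imgU: "\<And>l u. l \<in> {1..k} \<Longrightarrow> (rho (s l) - mat 1) *v u \<in> U"
    using img aU vec.span_minimal[OF _ subU] by (meson empty_subsetI insert_subset subsetD)
  have one: "rho \<one>\<^bsub>G\<^esub> = mat 1" and mult: "\<And>g h. g \<in> carrier G \<Longrightarrow> h \<in> carrier G \<Longrightarrow> rho (g \<otimes>\<^bsub>G\<^esub> h) = rho g ** rho h"
    using rep by (auto simp: is_representation_def)
  have inv: "\<And>g. g \<in> generate G (s ` {1..k}) \<Longrightarrow> \<forall>u\<in>U. rho g *v u \<in> U"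
  proof -
    fix g assume "g \<in> generate G (s ` {1..k})"
    then show "\<forall>u\<in>U. rho g *v u \<in> U"
    proof (induction rule: generate.induct)
      case one
      then show ?case by (simp add: \<open>rho \<one>\<^bsub>G\<^esub> = mat 1\<close>)
    next
      case (incl h)
      then obtain l where l: "l \<in> {1..k}" "h = s l" by auto
      show ?case
      proof
        fix u assume u: "u \<in> U"
        have "rho h *v u = u + (rho (s l) - mat 1) *v u" using l by (simp add: matrix_vector_mult_diff_rdistrib)
        then show "rho h *v u \<in> U" using u imgU[OF l(1)] subU by (simp add: vec.subspace_add)
      qed
    next
      case (inv h)
      then obtain l where l: "l \<in> {1..k}" "h = s l" by auto
      have hc: "h \<in> carrier G" using l Sc by auto
      have "rho (inv\<^bsub>G\<^esub> h) ** rho h = mat 1"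
        using mult[of "inv\<^bsub>G\<^esub> h" h] hc grp one by (simp add: group.l_inv group.inv_closed)
      then show ?case using inv_step[OF _ subU aU[OF l(1)] _ a0[OF l(1)]] img[OF l(1)] l by blast
    next
      case (eng h1 h2)
      have "h1 \<in> carrier G" "h2 \<in> carrier G"
        using eng(1,2) group.generate_in_carrier[OF grp Sc] by auto
      then show ?case using eng(3,4) mult by (simp add: matrix_vector_mul_assoc[symmetric])
    qed
  qed
  have "U = {0} \<or> U = UNIV" using irr subU inv gen by (auto simp: irreducible_rep_def)
  then have sp: "vec.span (\<alpha> ` {1..k}) = UNIV" using aU[OF assms(10)] a0[OF assms(10)] U_def by auto
  show ?thesis
  proof (cases "proportional (\<alpha> i) (\<alpha> j)")
    case True
    have li: "lin_indep_family [\<alpha> i]" using a0[OF assms(10)]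
      by (simp add: lin_indep_family_def vec.independent_insertI vec.independent_empty)
    obtain ix where "length ix = d - 1" "distinct ix" "set ix \<subseteq> {1..k}" "lin_indep_family ([\<alpha> i] @ map \<alpha> ix)"
      using extend_family[OF sp _ li, of "d - 1"] assms(8,9,10) by fastforce
    then show ?thesis using True by auto
  next
    case False
    have ne: "\<alpha> i \<noteq> \<alpha> j" using False unfolding proportional_def by (metis vector_smult_lid)
    have nsp: "\<alpha> i \<notin> vec.span {\<alpha> j}" using False unfolding proportional_def vec.span_singleton by auto
    have li: "lin_indep_family [\<alpha> i, \<alpha> j]" using a0[OF assms(11)] ne nsp
      by (simp add: lin_indep_family_def vec.independent_insertI vec.independent_empty)
    obtain ix where "length ix = d - 1" "distinct ix" "set ix \<subseteq> {1..k}" "lin_indep_family ([\<alpha> i, \<alpha> j] @ map \<alpha> ix)"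
      using extend_family[OF sp _ li, of "d - 1"] assms(8,9,10,11) by fastforce
    then show ?thesis using False by auto
  qed
qed
end
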